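(* Any amendment strategy is outcome-equivalent to the insertion-sort strategy.
   Context: Let $\mathcal{X}=\{1,\dots,n\}$, labelled so that the chair's preference (a ranking) is $1\succ\cdots\succ n$. A proto-ranking is an irreflexive transitive relation on $\mathcal{X}$; a ranking is a total proto-ranking; a tournament is a total asymmetric relation on $\mathcal{X}$. Interaction: given a tournament $\mathrel{W}$, start from $R_0=\varnothing$; in each period with $R_{t-1}$ not total the chair offers a pair $\{x,y\}$ unranked by $R_{t-1}$, the winner is $x$ if $x\mathrel{W}y$ and $y$ otherwise, and $R_t$ is the transitive closure of $R_{t-1}\cup\{(\text{winner},\text{loser})\}$; stop when $R_t$ is total. A strategy assigns to each non-terminal history (sequence of (winner, loser) pairs) a pair unranked at it; its outcome under $\mathrel{W}$ is the final ranking. Two strategies are outcome-equivalent if they have the same outcome under every tournament. Insertion-sort strategy: at a history with current proto-ranking $R$, let $L(z)=\{w: z\succ w,\ \text{neither } zRw\text{ nor } wRz\}$; let $x$ be the $\succ$-worst alternative with $L(x)\ne\varnothing$ and $y$ the $R$-highest element of $L(x)$; offer $\{x,y\}$. Amendment algorithm on a set $\{a_1\succ\cdots\succ a_m\}$: pit $a_{m-1}$ against $a_m$, then $a_{m-2}$ against the winner, then $a_{m-3}$ against the previous winner, etc.; the winner of the last round is the final winner. Recursive-amendment algorithm: run the amendment algorithm on $\mathcal{X}$ to get final winner $y_1$; run it on $\mathcal{X}\setminus\{y_1\}$ to get $y_2$; on $\mathcal{X}\setminus\{y_1,y_2\}$ to get $y_3$; and so on, where whenever the algorithm demands a vote on a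 pair already ranked as $xRy$ no vote is held and it is treated as if $x$ had won. An amendment strategy is any strategy whose behaviour along every history generated by it and some tournament coincides with the recursive-amendment algorithm. *)

theory Defs
  imports Main
begin

text \<open>Alternatives are 1..n (natural numbers); the chair's ranking is
  1 > 2 > ... > n, i.e. x is chair-preferred to y iff x < y.
  Relations are sets of pairs; (x,y) in R means x is ranked above y.
  A history is a list of (winner, loser) pairs.\<close>

definition alts :: "nat \<Rightarrow> nat set" where
  "alts n = {1..n}"

definition proto_ranking :: "nat \<Rightarrow> (nat \<times> nat) set \<Rightarrow> bool" where
  "proto_ranking n R \<longleftrightarrow> R \<subseteq> alts n \<times> alts n \<and> irrefl R \<and> trans R"

definition ranking :: "nat \<Rightarrow> (nat \<times> nat) set \<Rightarrow> bool" where
  "ranking n R \<longleftrightarrow> proto_ranking n R \<and> total_on (alts n) R"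

definition tournament :: "nat \<Rightarrow> (nat \<times> nat) set \<Rightarrow> bool" where
  "tournament n W \<longleftrightarrow> W \<subseteq> alts n \<times> alts n \<and> total_on (alts n) W
      \<and> (\<forall>x y. (x, y) \<in> W \<longrightarrow> (y, x) \<notin> W)"

definition rk :: "(nat \<times> nat) list \<Rightarrow> (nat \<times> nat) set" where
  "rk h = trancl (set h)"

definition terminal :: "nat \<Rightarrow> (nat \<times> nat) list \<Rightarrow> bool" where
  "terminal n h \<longleftrightarrow> total_on (alts n) (rk h)"

definition unranked :: "nat \<Rightarrow> (nat \<times> nat) list \<Rightarrow> nat \<Rightarrow> nat \<Rightarrow> bool" where
  "unranked n h x y \<longleftrightarrow> x \<in> alts n \<and> y \<in> alts n \<and> x \<noteq> y
      \<and> (x, y) \<notin> rk h \<and> (y, x) \<notin> rk h"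

inductive legal :: "nat \<Rightarrow> (nat \<times> nat) list \<Rightarrow> bool" for n where
  legal_Nil: "legal n []"
| legal_snoc: "legal n h \<Longrightarrow> \<not> terminal n h \<Longrightarrow> unranked n h x y \<Longrightarrow> legal n (h @ [(x, y)])"

text \<open>A strategy maps histories to offered pairs (x,y), standing for the pair {x,y}.\<close>
type_synonym strategy = "(nat \<times> nat) list \<Rightarrow> nat \<times> nat"

definition is_strategy :: "nat \<Rightarrow> strategy \<Rightarrow> bool" where
  "is_strategy n \<sigma> \<longleftrightarrow>
     (\<forall>h. legal n h \<and> \<not> terminal n h \<longrightarrow> unranked n h (fst (\<sigma> h)) (snd (\<sigma> h)))"

definition play :: "(nat \<times> nat) set \<Rightarrow> nat \<times> nat \<Rightarrow> nat \<times> nat" where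
  "play W p = (if p \<in> W then p else (snd p, fst p))"

primrec hist :: "nat \<Rightarrow> strategy \<Rightarrow> (nat \<times> nat) set \<Rightarrow> nat \<Rightarrow> (nat \<times> nat) list" where
  "hist n \<sigma> W 0 = []"
| "hist n \<sigma> W (Suc k) =
     (if terminal n (hist n \<sigma> W k) then hist n \<sigma> W k
      else hist n \<sigma> W k @ [play W (\<sigma> (hist n \<sigma> W k))])"

definition outcome :: "nat \<Rightarrow> strategy \<Rightarrow> (nat \<times> nat) set \<Rightarrow> (nat \<times> nat) set" where
  "outcome n \<sigma> W = rk (hist n \<sigma> W (LEAST k. terminal n (hist n \<sigma> W k)))"

definition outcome_equiv :: "nat \<Rightarrow> strategy \<Rightarrow> strategy \<Rightarrow> bool" where
  "outcome_equiv n \<sigma> \<tau> \<longleftrightarrow> (\<forall>W. tournament n W \<longrightarrow> outcome n \<sigma> W = outcome n \<tau> W)"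

definition Lset :: "nat \<Rightarrow> (nat \<times> nat) list \<Rightarrow> nat \<Rightarrow> nat set" where
  "Lset n h z = {w. z < w \<and> unranked n h z w}"

definition insertion_strategy :: "nat \<Rightarrow> strategy" where
  "insertion_strategy n h =
     (let x = Max {z \<in> alts n. Lset n h z \<noteq> {}};
          y = (THE y. y \<in> Lset n h x \<and> (\<forall>w \<in> Lset n h x. w \<noteq> y \<longrightarrow> (y, w) \<in> rk h))
      in (x, y))"

text \<open>State: (history of votes held, current winner).\<close>
definition duel :: "(nat \<times> nat) set \<Rightarrow> (nat \<times> nat) list \<times> nat \<Rightarrow> nat \<Rightarrow> (nat \<times> nat) list \<times> nat" where
  "duel W st a =
     (let h = fst st; c = snd st in
      if (a, c) \<in> rk h then (h, a)
      else if (c, a) \<in> rk h then (h, c)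
      else let v = play W (a, c) in (h @ [v], fst v))"

text \<open>Amendment algorithm on the list S = [a1,...,am] (in chair order a1 > ... > am):
  a(m-1) vs am, then a(m-2) vs the winner, etc.\<close>
definition amendment :: "(nat \<times> nat) set \<Rightarrow> (nat \<times> nat) list \<Rightarrow> nat list \<Rightarrow> (nat \<times> nat) list \<times> nat" where
  "amendment W h S = foldl (duel W) (h, last S) (rev (butlast S))"

text \<open>Recursive amendment; the first argument bounds the number of rounds (each round
  removes the final winner from S, so |S| rounds suffice).\<close>
primrec ramend :: "nat \<Rightarrow> (nat \<times> nat) set \<Rightarrow> (nat \<times> nat) list \<Rightarrow> nat list \<Rightarrow> (nat \<times> nat) list" where
  "ramend 0 W h S = h"
| "ramend (Suc k) W h S =
     (if S = [] then h
      else let r = amendment W h S in ramend k W (fst r) (remove1 (snd r) S))"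

definition amend_votes :: "nat \<Rightarrow> (nat \<times> nat) set \<Rightarrow> (nat \<times> nat) list" where
  "amend_votes n W = ramend n W [] [1..<Suc n]"

definition amendment_strategy :: "nat \<Rightarrow> strategy \<Rightarrow> bool" where
  "amendment_strategy n \<sigma> \<longleftrightarrow>
     (\<forall>W. tournament n W \<longrightarrow> (\<forall>k. \<not> terminal n (hist n \<sigma> W k) \<longrightarrow>
        k < length (amend_votes n W) \<and>
        amend_votes n W ! k = play W (\<sigma> (hist n \<sigma> W k))))"

end

theory Submission
  imports Defs
begin

definition sto :: "nat set \<Rightarrow> (nat \<times> nat) set \<Rightarrow> bool" where
  "sto A R \<longleftrightarrow> R \<subseteq> A \<times> A \<and> irrefl R \<and> trans R \<and> total_on A R"

definition condA :: "(nat \<times> nat) set \<Rightarrow> nat set \<Rightarrow> (nat \<times> nat) set \<Rightarrow> bool" where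
  "condA W A I \<longleftrightarrow> (\<forall>k\<in>A. \<forall>t\<in>A. k < t \<longrightarrow> (t,k) \<in> I \<longrightarrow> (t,k) \<in> W)"

definition condB :: "(nat \<times> nat) set \<Rightarrow> nat set \<Rightarrow> (nat \<times> nat) set \<Rightarrow> bool" where
  "condB W A I \<longleftrightarrow> (\<forall>k\<in>A. \<forall>t\<in>A. k < t \<longrightarrow> (k,t) \<in> I \<longrightarrow>
      (\<forall>v\<in>A. k < v \<longrightarrow> \<not> ((k,v) \<in> I \<and> (v,t) \<in> I)) \<longrightarrow> (k,t) \<in> W)"

lemma tour_other:
  assumes "tournament n W" "x \<in> alts n" "y \<in> alts n" "x \<noteq> y" "(x,y) \<notin> W"
  shows "(y,x) \<in> W"
  using assms unfolding tournament_def total_on_def by blast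

lemma tour_asym:
  assumes "tournament n W" "(x,y) \<in> W"
  shows "(y,x) \<notin> W"
  using assms unfolding tournament_def by blast

lemma exists_I:
  assumes tour: "tournament n W" and fin: "finite A"
  shows "A \<subseteq> alts n \<Longrightarrow> \<exists>I. sto A I \<and> condA W A I \<and> condB W A I"
  using fin
proof (induction A rule: finite_linorder_min_induct)
  case empty
  show ?case by (rule exI[of _ "{}"]) (simp add: sto_def condA_def condB_def irrefl_def trans_def total_on_def)
next
  case (insert x A)
  from insert obtain I' where I': "sto A I'" "condA W A I'" "condB W A I'" by auto
  have xA: "x \<notin> A" using insert by auto
  have xal: "x \<in> alts n" and Aal: "A \<subseteq> alts n" using insert by auto
  define B where "B = {b\<in>A. (x,b)\<in>W}"
  define U where "U = {u\<in>A. \<forall>b\<in>B. (u,b)\<in>I'}"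
  define I where "I = I' \<union> (\<lambda>u. (u,x)) ` U \<union> (\<lambda>w. (x,w)) ` (A - U)"
  have I'sub: "I' \<subseteq> A \<times> A" and irr: "\<And>a. (a,a) \<notin> I'" and tr: "\<And>a b c. (a,b)\<in>I' \<Longrightarrow> (b,c)\<in>I' \<Longrightarrow> (a,c)\<in>I'"
    and tot: "\<And>a b. a\<in>A \<Longrightarrow> b\<in>A \<Longrightarrow> a\<noteq>b \<Longrightarrow> (a,b)\<in>I' \<or> (b,a)\<in>I'"
    using I'(1) unfolding sto_def irrefl_def trans_def total_on_def by blast+
  have UA: "U \<subseteq> A" unfolding U_def by auto
  have ups: "\<And>u u'. u\<in>U \<Longrightarrow> (u',u)\<in>I' \<Longrightarrow> u'\<in>U"
    unfolding U_def using I'sub tr by blast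
  have Imem: "\<And>a b. (a,b)\<in>I \<longleftrightarrow> (a,b)\<in>I' \<or> (a\<in>U \<and> b = x) \<or> (a = x \<and> b\<in>A \<and> b\<notin>U)"
    unfolding I_def by auto
  have Icases: "\<And>a b P. (a,b)\<in>I \<Longrightarrow> ((a,b)\<in>I' \<Longrightarrow> P) \<Longrightarrow> (a\<in>U \<Longrightarrow> b = x \<Longrightarrow> P)
     \<Longrightarrow> (a = x \<Longrightarrow> b\<in>A \<Longrightarrow> b\<notin>U \<Longrightarrow> P) \<Longrightarrow> P"
    unfolding Imem by blast
  have I'A: "\<And>a b. (a,b)\<in>I' \<Longrightarrow> a\<in>A \<and> b\<in>A" using I'sub by blast
  have sto: "sto (insert x A) I"
    unfolding sto_def
  proof (intro conjI)
    show "I \<subseteq> insert x A \<times> insert x A" using I'sub UA unfolding I_def by auto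
    show "irrefl I" unfolding irrefl_def
    proof
      fix a show "(a,a)\<notin>I"
      proof
        assume "(a,a)\<in>I"
        then show False
          by (rule Icases) (use irr xA UA in auto)
      qed
    qed
    show "trans I" unfolding trans_def
    proof (intro allI impI)
      fix a b c assume ab: "(a,b)\<in>I" and bc: "(b,c)\<in>I"
      show "(a,c)\<in>I"
        using ab
      proof (rule Icases)
        assume abI: "(a,b)\<in>I'"
        show ?thesis using bc
        proof (rule Icases)
          assume "(b,c)\<in>I'" then show ?thesis using abI tr Imem by blast
        next
          assume "b\<in>U" "c = x" then show ?thesis using ups abI Imem by blast
        next
          assume "b = x" then show ?thesis using abI I'A xA by blast
        qed
      next
        assume aU: "a\<in>U" and bx: "b = x"
        show ?thesis using bc
        proof (rule Icases)
          assume "(b,c)\<in>I'" then show ?thesis using bx I'A xA by blast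
        next
          assume "b\<in>U" then show ?thesis using bx UA xA by blast
        next
          assume cA: "c\<in>A" and cU: "c\<notin>U"
          have "a \<noteq> c" using aU cU by blast
          then have "(a,c)\<in>I' \<or> (c,a)\<in>I'" using tot aU UA cA by blast
          then show ?thesis using ups aU cU Imem by blast
        qed
      next
        assume ax: "a = x" and bA: "b\<in>A" and bU: "b\<notin>U"
        show ?thesis using bc
        proof (rule Icases)
          assume bcI: "(b,c)\<in>I'"
          then have "c\<in>A" "c\<notin>U" using I'A ups bU by blast+
          then show ?thesis using ax Imem by blast
        next
          assume "b\<in>U" then show ?thesis using bU by blast
        next
          assume "b = x" then show ?thesis using bA xA by blast
        qed
      qed
    qed
    show "total_on (insert x A) I" unfolding total_on_def
    proof (intro ballI impI)
      fix a b assume a: "a\<in>insert x A" and b: "b\<in>insert x A" and ab: "a\<noteq>b"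
      show "(a,b)\<in>I \<or> (b,a)\<in>I"
      proof (cases "a = x")
        case True then show ?thesis using b ab Imem by auto
      next
        case False
        show ?thesis
        proof (cases "b = x")
          case True then show ?thesis using a ab Imem by auto
        next
          case False
          then show ?thesis using \<open>a\<noteq>x\<close> a b ab tot Imem by auto
        qed
      qed
    qed
  qed
  have cA: "condA W (insert x A) I"
    unfolding condA_def
  proof (intro ballI impI)
    fix k t assume k: "k \<in> insert x A" and t: "t \<in> insert x A" and kt: "k < t" and tk: "(t,k)\<in>I"
    show "(t,k)\<in>W"
    proof (cases "k = x")
      case True
      then have tA: "t \<in> A" using t kt by auto
      have "t \<in> U" using tk by (rule Icases) (use True I'A xA in auto)
      then have "t \<notin> B" unfolding U_def using irr by blast
      then have "(x,t)\<notin>W" using tA B_def by auto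
      moreover have "t \<in> alts n" "x \<noteq> t" using tA Aal xA by auto
      ultimately show ?thesis using tour_other[OF tour xal] True by blast
    next
      case False
      then have "k\<in>A" "t\<in>A" "t\<noteq>x" using k t kt insert(2) by auto
      have "(t,k)\<in>I'" using tk by (rule Icases) (use \<open>k\<in>A\<close> \<open>t\<noteq>x\<close> xA in auto)
      then show ?thesis using I'(2) \<open>k\<in>A\<close> \<open>t\<in>A\<close> kt unfolding condA_def by blast
    qed
  qed
  have cB: "condB W (insert x A) I"
    unfolding condB_def
  proof (intro ballI impI)
    fix k t assume k: "k \<in> insert x A" and t: "t \<in> insert x A" and kt: "k < t" and ktI: "(k,t)\<in>I"
      and btw: "\<forall>v\<in>insert x A. k < v \<longrightarrow> \<not> ((k,v)\<in>I \<and> (v,t)\<in>I)"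
    show "(k,t)\<in>W"
    proof (cases "k = x")
      case True
      then have tA: "t \<in> A" using t kt by auto
      have "t \<notin> U" using ktI by (rule Icases) (use True I'A xA UA in auto)
      then obtain b where b: "b\<in>B" "(t,b)\<notin>I'" using tA U_def by auto
      show ?thesis
      proof (cases "t = b")
        case True
        then show ?thesis using b B_def \<open>k = x\<close> by auto
      next
        case False
        have bA: "b\<in>A" using b B_def by auto
        have "(b,t)\<in>I'" using tot[OF bA tA] False b by auto
        moreover have "b \<notin> U" using b(1) irr U_def by blast
        ultimately have "(x,b)\<in>I" "(b,t)\<in>I" using bA unfolding I_def by auto
        moreover have "x < b" using insert(2) bA by auto
        ultimately show ?thesis using btw \<open>k = x\<close> bA by auto
      qed
    next
      case False
      then have kA: "k\<in>A" and tA: "t\<in>A" and "t\<noteq>x" using k t kt insert(2) by auto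
      have "(k,t)\<in>I'" using ktI by (rule Icases) (use kA \<open>t\<noteq>x\<close> False xA in auto)
      moreover have "\<forall>v\<in>A. k < v \<longrightarrow> \<not> ((k,v)\<in>I' \<and> (v,t)\<in>I')"
        using btw Imem by auto
      ultimately show ?thesis using I'(3) kA tA kt unfolding condB_def by blast
    qed
  qed
  show ?case using sto cA cB by blast
qed



lemma top_exists:
  assumes "finite B" "B \<noteq> {}" "\<forall>a\<in>B. \<forall>b\<in>B. a \<noteq> b \<longrightarrow> (a,b) \<in> R \<or> (b,a) \<in> R" "trans R"
  shows "\<exists>y\<in>B. \<forall>w\<in>B. w \<noteq> y \<longrightarrow> (y,w) \<in> R"
  using assms
proof (induction B rule: finite_ne_induct)
  case (singleton x) then show ?case by auto
next
  case (insert a B)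
  then obtain y where y: "y \<in> B" "\<forall>w\<in>B. w \<noteq> y \<longrightarrow> (y,w) \<in> R" by auto
  show ?case
  proof (cases "(a,y) \<in> R")
    case True
    have "\<forall>w\<in>insert a B. w \<noteq> a \<longrightarrow> (a,w) \<in> R"
    proof (intro ballI impI)
      fix w assume "w \<in> insert a B" "w \<noteq> a"
      then have "w \<in> B" by simp
      show "(a,w) \<in> R"
      proof (cases "w = y")
        case True then show ?thesis using \<open>(a,y) \<in> R\<close> by simp
      next
        case False
        then have "(y,w) \<in> R" using y \<open>w \<in> B\<close> by blast
        then show ?thesis using \<open>(a,y) \<in> R\<close> insert.prems(2) unfolding trans_def by blast
      qed
    qed
    then show ?thesis by blast
  next
    case False
    have "a \<noteq> y" using y(1) insert.hyps by blast
    moreover have "a \<in> insert a B" "y \<in> insert a B" using y(1) by simp_all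
    ultimately have "(a,y) \<in> R \<or> (y,a) \<in> R" using insert.prems(1) by blast
    then have "(y,a) \<in> R" using False by blast
    then show ?thesis using y by blast
  qed
qed

lemma amend_single: "amendment W h [a] = (h, a)"
  by (simp add: amendment_def)

lemma amend_cons: "S \<noteq> [] \<Longrightarrow> amendment W h (a # S) = duel W (amendment W h S) a"
  by (simp add: amendment_def)

lemma finite_alts: "finite (alts n)" by (simp add: alts_def)

context
  fixes n W I
  assumes tour: "tournament n W" and sI: "sto (alts n) I"
    and cAI: "condA W (alts n) I" and cBI: "condB W (alts n) I"
begin

lemma Isub: "I \<subseteq> alts n \<times> alts n" using sI unfolding sto_def by blast
lemma irrI: "(a,a) \<notin> I" using sI unfolding sto_def irrefl_def by blast
lemma trI: "(a,b) \<in> I \<Longrightarrow> (b,c) \<in> I \<Longrightarrow> (a,c) \<in> I" using sI unfolding sto_def trans_def by blast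
lemma totI: "a \<in> alts n \<Longrightarrow> b \<in> alts n \<Longrightarrow> a \<noteq> b \<Longrightarrow> (a,b) \<in> I \<or> (b,a) \<in> I"
  using sI unfolding sto_def total_on_def by blast

lemma rk_sub: "set h \<subseteq> I \<Longrightarrow> rk h \<subseteq> I"
proof
  fix p assume h: "set h \<subseteq> I" and p: "p \<in> rk h"
  have "p \<in> I\<^sup>+" using trancl_mono[OF p[unfolded rk_def] h] .
  moreover have "trans I" using sI unfolding sto_def by blast
  ultimately show "p \<in> I" by (simp add: trancl_id)
qed

lemma play_ok:
  assumes "x \<in> alts n" "y \<in> alts n" "x < y" "(x,y) \<in> I \<Longrightarrow> (x,y) \<in> W"
  shows "play W (x,y) \<in> I"
proof (cases "(x,y) \<in> W")
  case True
  have "(x,y) \<in> I"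
  proof (rule ccontr)
    assume "(x,y) \<notin> I"
    then have "(y,x) \<in> I" using totI assms by fastforce
    then have "(y,x) \<in> W" using cAI assms unfolding condA_def by blast
    then show False using tour_asym[OF tour True] by blast
  qed
  then show ?thesis using True by (simp add: play_def)
next
  case False
  have "(y,x) \<in> I"
  proof (rule ccontr)
    assume "(y,x) \<notin> I"
    then have "(x,y) \<in> I" using totI assms by fastforce
    then show False using assms False by blast
  qed
  then show ?thesis using False by (simp add: play_def)
qed

lemma duel_ok:
  assumes h: "set h \<subseteq> I" and a: "a \<in> alts n" and c: "c \<in> alts n" and ac: "a < c"
    and hyp: "(a,c) \<in> I \<Longrightarrow> (a,c) \<in> W"
  shows "set (fst (duel W (h,c) a)) \<subseteq> I \<and> (snd (duel W (h,c) a) = a \<and> (a,c) \<in> I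
          \<or> snd (duel W (h,c) a) = c \<and> (c,a) \<in> I)"
proof -
  have R: "rk h \<subseteq> I" using rk_sub h .
  have pI: "play W (a,c) \<in> I" using play_ok a c ac hyp by blast
  show ?thesis
  proof (cases "(a,c) \<in> rk h")
    case True then show ?thesis using h R by (auto simp: duel_def)
  next
    case False
    show ?thesis
    proof (cases "(c,a) \<in> rk h")
      case True then show ?thesis using h R False by (auto simp: duel_def)
    next
      case False2: False
      have "fst (duel W (h,c) a) = h @ [play W (a,c)]" "snd (duel W (h,c) a) = fst (play W (a,c))"
        using False False2 by (simp_all add: duel_def Let_def)
      moreover have "fst (play W (a,c)) = a \<and> (a,c) \<in> I \<or> fst (play W (a,c)) = c \<and> (c,a) \<in> I"
        using pI by (auto simp: play_def split: if_splits)
      ultimately show ?thesis using h pI by auto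
    qed
  qed
qed

definition goodS :: "nat list \<Rightarrow> bool" where
  "goodS S \<longleftrightarrow> (\<forall>k\<in>set S. \<forall>t\<in>set S. k < t \<longrightarrow> (k,t) \<in> I \<longrightarrow>
      (\<forall>v\<in>set S. k < v \<longrightarrow> \<not> ((k,v) \<in> I \<and> (v,t) \<in> I)) \<longrightarrow> (k,t) \<in> W)"

lemma amend_ok:
  "S \<noteq> [] \<Longrightarrow> sorted_wrt (<) S \<Longrightarrow> set S \<subseteq> alts n \<Longrightarrow> goodS S \<Longrightarrow> set h \<subseteq> I \<Longrightarrow>
   set (fst (amendment W h S)) \<subseteq> I \<and> snd (amendment W h S) \<in> set S \<and>
   (\<forall>s\<in>set S. s \<noteq> snd (amendment W h S) \<longrightarrow> (snd (amendment W h S), s) \<in> I)"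
proof (induction S)
  case Nil then show ?case by simp
next
  case (Cons a S)
  show ?case
  proof (cases "S = []")
    case True then show ?thesis using Cons.prems by (simp add: amend_single)
  next
    case False
    have srt: "sorted_wrt (<) S" and aS: "\<forall>v\<in>set S. a < v" using Cons.prems(2) by simp_all
    have Sal: "set S \<subseteq> alts n" using Cons.prems(3) by simp
    have gS: "goodS S" unfolding goodS_def
    proof (intro ballI impI)
      fix k t assume k: "k \<in> set S" and t: "t \<in> set S" and kt: "k < t" and ktI: "(k,t) \<in> I"
        and btw: "\<forall>v\<in>set S. k < v \<longrightarrow> \<not> ((k,v) \<in> I \<and> (v,t) \<in> I)"
      have "a < k" using aS k by blast
      then have "\<forall>v\<in>set (a # S). k < v \<longrightarrow> \<not> ((k,v) \<in> I \<and> (v,t) \<in> I)" using btw by auto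
      then show "(k,t) \<in> W" using Cons.prems(4) k t kt ktI unfolding goodS_def by simp
    qed
    obtain h' c where hc: "amendment W h S = (h', c)" by fastforce
    have IH0: "set (fst (amendment W h S)) \<subseteq> I \<and> snd (amendment W h S) \<in> set S \<and>
   (\<forall>s\<in>set S. s \<noteq> snd (amendment W h S) \<longrightarrow> (snd (amendment W h S), s) \<in> I)"
      by (rule Cons.IH[OF False srt Sal gS Cons.prems(5)])
    have IH: "set h' \<subseteq> I" "c \<in> set S" "\<forall>s\<in>set S. s \<noteq> c \<longrightarrow> (c, s) \<in> I"
      using IH0 unfolding hc by simp_all
    have ac: "a < c" using Cons.prems(2) IH(2) by simp
    have aal: "a \<in> alts n" and cal: "c \<in> alts n" using Cons.prems(3) IH(2) by auto
    have hyp: "(a,c) \<in> W" if aci: "(a,c) \<in> I"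
    proof -
      have "\<forall>v\<in>set (a # S). a < v \<longrightarrow> \<not> ((a,v) \<in> I \<and> (v,c) \<in> I)"
      proof (intro ballI impI notI)
        fix v assume v: "v \<in> set (a # S)" "a < v" and vv: "(a,v) \<in> I \<and> (v,c) \<in> I"
        then have "v \<in> set S" by auto
        moreover have "v \<noteq> c" using vv irrI by blast
        ultimately have "(c,v) \<in> I" using IH(3) by blast
        then show False using vv trI irrI by blast
      qed
      then show ?thesis using Cons.prems(4) aci ac IH(2) unfolding goodS_def by simp
    qed
    have D: "set (fst (duel W (h',c) a)) \<subseteq> I \<and> (snd (duel W (h',c) a) = a \<and> (a,c) \<in> I
          \<or> snd (duel W (h',c) a) = c \<and> (c,a) \<in> I)"
      using duel_ok[OF IH(1) aal cal ac hyp] by blast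
    have E: "amendment W h (a # S) = duel W (h',c) a" using amend_cons[OF False] hc by simp
    show ?thesis unfolding E
    proof (intro conjI)
      show "set (fst (duel W (h', c) a)) \<subseteq> I" using D by blast
      show "snd (duel W (h', c) a) \<in> set (a # S)" using D IH(2) by auto
      show "\<forall>s\<in>set (a # S). s \<noteq> snd (duel W (h', c) a) \<longrightarrow> (snd (duel W (h', c) a), s) \<in> I"
      proof (intro ballI impI)
        fix s assume s: "s \<in> set (a # S)" and sn: "s \<noteq> snd (duel W (h', c) a)"
        from D show "(snd (duel W (h', c) a), s) \<in> I"
        proof (elim conjE disjE)
          assume d1: "snd (duel W (h', c) a) = a" and d2: "(a, c) \<in> I"
          then have "s \<in> set S" using s sn by auto
          then show ?thesis using d1 d2 IH(3) trI by (cases "s = c") auto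
        next
          assume d1: "snd (duel W (h', c) a) = c" and d2: "(c, a) \<in> I"
          then show ?thesis using s sn IH(3) by auto
        qed
      qed
    qed
  qed
qed

lemma ramend_ok:
  "sorted_wrt (<) S \<Longrightarrow> set S \<subseteq> alts n \<Longrightarrow> (\<forall>s\<in>set S. \<forall>y. (s,y) \<in> I \<longrightarrow> y \<in> set S) \<Longrightarrow>
   set h \<subseteq> I \<Longrightarrow> set (ramend k W h S) \<subseteq> I"
proof (induction k arbitrary: S h)
  case 0 then show ?case by simp
next
  case (Suc k)
  show ?case
  proof (cases "S = []")
    case True then show ?thesis using Suc.prems by simp
  next
    case False
    have gS: "goodS S" unfolding goodS_def
    proof (intro ballI impI)
      fix k t assume k: "k \<in> set S" and t: "t \<in> set S" and kt: "k < t" and ktI: "(k,t) \<in> I"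
        and btw: "\<forall>v\<in>set S. k < v \<longrightarrow> \<not> ((k,v) \<in> I \<and> (v,t) \<in> I)"
      have "\<forall>v\<in>alts n. k < v \<longrightarrow> \<not> ((k,v) \<in> I \<and> (v,t) \<in> I)"
        using btw Suc.prems(3) k by blast
      then show "(k,t) \<in> W" using cBI k t kt ktI Suc.prems(2) unfolding condB_def by blast
    qed
    obtain h' c where hc: "amendment W h S = (h', c)" by fastforce
    have A: "set h' \<subseteq> I" "c \<in> set S" "\<forall>s\<in>set S. s \<noteq> c \<longrightarrow> (c, s) \<in> I"
      using amend_ok[OF False Suc.prems(1,2) gS Suc.prems(4)] hc by auto
    have dS: "distinct S" using Suc.prems(1) strict_sorted_iff by blast
    have s1: "sorted_wrt (<) (remove1 c S)"
      using Suc.prems(1) by (simp add: strict_sorted_iff sorted_remove1)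
    have s2: "set (remove1 c S) \<subseteq> alts n" using Suc.prems(2) dS by auto
    have s3: "\<forall>s\<in>set (remove1 c S). \<forall>y. (s,y) \<in> I \<longrightarrow> y \<in> set (remove1 c S)"
    proof (intro ballI allI impI)
      fix s y assume s: "s \<in> set (remove1 c S)" and sy: "(s,y) \<in> I"
      have "s \<in> set S" "s \<noteq> c" using s dS by auto
      then have "y \<in> set S" "(c,s) \<in> I" using Suc.prems(3) sy A(3) by blast+
      moreover have "y \<noteq> c" using \<open>(c,s) \<in> I\<close> sy trI irrI by blast
      ultimately show "y \<in> set (remove1 c S)" using dS by auto
    qed
    have "ramend (Suc k) W h S = ramend k W h' (remove1 c S)" using False hc by (simp add: Let_def)
    then show ?thesis using Suc.IH[OF s1 s2 s3 A(1)] by simp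
  qed
qed

lemma amend_votes_ok: "set (amend_votes n W) \<subseteq> I"
  unfolding amend_votes_def
proof (rule ramend_ok)
  show "set [1..<Suc n] \<subseteq> alts n" by (auto simp: alts_def)
  show "\<forall>s\<in>set [1..<Suc n]. \<forall>y. (s, y) \<in> I \<longrightarrow> y \<in> set [1..<Suc n]"
    using Isub by (auto simp: alts_def)
qed (auto simp del: upt_Suc)


lemma outcome_I:
  assumes ex: "\<exists>k. terminal n (hist n \<sigma> W k)" and sub: "\<And>k. set (hist n \<sigma> W k) \<subseteq> I"
  shows "outcome n \<sigma> W = I"
proof -
  define m where "m = (LEAST k. terminal n (hist n \<sigma> W k))"
  have T: "terminal n (hist n \<sigma> W m)" unfolding m_def using ex by (rule LeastI_ex)
  have S: "rk (hist n \<sigma> W m) \<subseteq> I" using rk_sub sub by blast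
  have "I \<subseteq> rk (hist n \<sigma> W m)"
  proof
    fix p assume p: "p \<in> I"
    obtain a b where ab: "p = (a,b)" by fastforce
    have "a \<in> alts n" "b \<in> alts n" "a \<noteq> b" using p ab Isub irrI by auto
    then have "(a,b) \<in> rk (hist n \<sigma> W m) \<or> (b,a) \<in> rk (hist n \<sigma> W m)"
      using T unfolding terminal_def total_on_def by blast
    then show "p \<in> rk (hist n \<sigma> W m)" using S p ab trI irrI by blast
  qed
  then show ?thesis using S unfolding outcome_def m_def by blast
qed

lemma sigma_outcome:
  assumes am: "amendment_strategy n \<sigma>"
  shows "outcome n \<sigma> W = I"
proof -
  let ?av = "amend_votes n W"
  have A: "\<And>k. \<not> terminal n (hist n \<sigma> W k) \<Longrightarrow> k < length ?av \<and> ?av ! k = play W (\<sigma> (hist n \<sigma> W k))"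
    using am tour unfolding amendment_strategy_def by blast
  have sub: "set (hist n \<sigma> W k) \<subseteq> set ?av" for k
  proof (induction k)
    case 0 then show ?case by simp
  next
    case (Suc k)
    show ?case
    proof (cases "terminal n (hist n \<sigma> W k)")
      case True then show ?thesis using Suc by simp
    next
      case False
      then have "play W (\<sigma> (hist n \<sigma> W k)) \<in> set ?av" using A[OF False] nth_mem by metis
      then show ?thesis using Suc False by simp
    qed
  qed
  have ex: "\<exists>k. terminal n (hist n \<sigma> W k)"
  proof (rule ccontr)
    assume "\<not> ?thesis"
    then have "length ?av < length ?av" using A by blast
    then show False by simp
  qed
  show ?thesis by (rule outcome_I[OF ex]) (use sub amend_votes_ok in blast)
qed

lemma ins_step:
  assumes h: "set h \<subseteq> I" and nt: "\<not> terminal n h"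
  shows "unranked n h (fst (insertion_strategy n h)) (snd (insertion_strategy n h))
         \<and> play W (insertion_strategy n h) \<in> I"
proof -
  let ?R = "rk h"
  have RI: "?R \<subseteq> I" using rk_sub h .
  have trR: "trans ?R" unfolding rk_def by (rule trans_trancl)
  define Z where "Z = {z \<in> alts n. Lset n h z \<noteq> {}}"
  obtain u w where uw: "u \<in> alts n" "w \<in> alts n" "u \<noteq> w" "(u,w) \<notin> ?R" "(w,u) \<notin> ?R"
    using nt unfolding terminal_def total_on_def by blast
  have "Z \<noteq> {}"
  proof (cases "u < w")
    case True
    then have "w \<in> Lset n h u" using uw unfolding Lset_def unranked_def by auto
    then show ?thesis using uw unfolding Z_def by blast
  next
    case False
    then have "w < u" using uw by simp
    then have "u \<in> Lset n h w" using uw unfolding Lset_def unranked_def by auto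
    then show ?thesis using uw unfolding Z_def by blast
  qed
  moreover have fZ: "finite Z" unfolding Z_def using finite_alts by simp
  define x where "x = Max Z"
  have xZ: "x \<in> Z" unfolding x_def using Max_in[OF fZ \<open>Z \<noteq> {}\<close>] .
  have xal: "x \<in> alts n" using xZ Z_def by simp
  have big: "\<And>z. z \<in> alts n \<Longrightarrow> x < z \<Longrightarrow> Lset n h z = {}"
  proof (rule ccontr)
    fix z assume "z \<in> alts n" "x < z" "Lset n h z \<noteq> {}"
    then have "z \<in> Z" unfolding Z_def by simp
    then have "z \<le> x" unfolding x_def using fZ by simp
    then show False using \<open>x < z\<close> by simp
  qed
  have Tot: "(a,b) \<in> ?R \<or> (b,a) \<in> ?R" if "a \<in> alts n" "b \<in> alts n" "x < a" "x < b" "a \<noteq> b" for a b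
  proof (rule ccontr)
    assume un: "\<not> ?thesis"
    show False
    proof (cases "a < b")
      case True
      then have "b \<in> Lset n h a" using un that unfolding Lset_def unranked_def by auto
      then show False using big that by blast
    next
      case False
      then have "a \<in> Lset n h b" using un that unfolding Lset_def unranked_def by auto
      then show False using big that by blast
    qed
  qed
  define L where "L = Lset n h x"
  have Lne: "L \<noteq> {}" using xZ unfolding Z_def L_def by simp
  have Lsub: "L \<subseteq> alts n" "\<And>v. v \<in> L \<Longrightarrow> x < v" unfolding L_def Lset_def unranked_def by auto
  have fL: "finite L" using Lsub(1) finite_alts finite_subset by blast
  have "\<forall>a\<in>L. \<forall>b\<in>L. a \<noteq> b \<longrightarrow> (a,b) \<in> ?R \<or> (b,a) \<in> ?R"
    using Tot Lsub by blast
  then obtain y where y: "y \<in> L" "\<forall>v\<in>L. v \<noteq> y \<longrightarrow> (y,v) \<in> ?R"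
    using top_exists[OF fL Lne _ trR] by blast
  have theq: "(THE y. y \<in> L \<and> (\<forall>v\<in>L. v \<noteq> y \<longrightarrow> (y,v) \<in> ?R)) = y"
  proof (rule the_equality)
    show "y \<in> L \<and> (\<forall>v\<in>L. v \<noteq> y \<longrightarrow> (y,v) \<in> ?R)" using y by blast
  next
    fix y' assume y': "y' \<in> L \<and> (\<forall>v\<in>L. v \<noteq> y' \<longrightarrow> (y',v) \<in> ?R)"
    show "y' = y"
    proof (rule ccontr)
      assume "y' \<noteq> y"
      then have ne: "y \<noteq> y'" by simp
      have y'L: "y' \<in> L" using y' by blast
      have "(y,y') \<in> ?R" using y(2)[rule_format, OF y'L] ne by simp
      moreover have "(y',y) \<in> ?R" using y'[THEN conjunct2, rule_format, OF y(1)] ne by simp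
      ultimately have "(y,y') \<in> ?R" "(y',y) \<in> ?R" by blast+
      then have "(y,y) \<in> I" using RI trI by blast
      then show False using irrI by blast
    qed
  qed
  have st: "insertion_strategy n h = (x, y)"
    unfolding insertion_strategy_def Let_def
    using theq unfolding x_def Z_def L_def by simp
  have un: "unranked n h x y" using y(1) unfolding L_def Lset_def by simp
  have yal: "y \<in> alts n" and xy: "x < y" using y(1) Lsub by auto
  have hyp: "(x,y) \<in> W" if xyI: "(x,y) \<in> I"
  proof -
    have "\<forall>v\<in>alts n. x < v \<longrightarrow> \<not> ((x,v) \<in> I \<and> (v,y) \<in> I)"
    proof (intro ballI impI notI)
      fix v assume val: "v \<in> alts n" and xv: "x < v" and vv: "(x,v) \<in> I \<and> (v,y) \<in> I"
      have vy: "v \<noteq> y" using vv irrI by blast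
      show False
      proof (cases "v \<in> L")
        case True
        then have "(y,v) \<in> I" using y vy RI by blast
        then show False using vv trI irrI by blast
      next
        case False
        then have "(x,v) \<in> ?R \<or> (v,x) \<in> ?R" using val xv xal unfolding L_def Lset_def unranked_def by auto
        moreover have "(v,x) \<notin> ?R" using vv RI trI irrI by blast
        ultimately have xvR: "(x,v) \<in> ?R" by blast
        have "(v,y) \<in> ?R \<or> (y,v) \<in> ?R" using Tot[OF val yal xv xy vy] .
        moreover have "(y,v) \<notin> ?R" using vv RI trI irrI by blast
        ultimately have "(v,y) \<in> ?R" by blast
        then have "(x,y) \<in> ?R" using xvR trR unfolding trans_def by blast
        then show False using un unfolding unranked_def by blast
      qed
    qed
    then show ?thesis using cBI xal yal xy xyI unfolding condB_def by blast
  qed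
  have "play W (x,y) \<in> I" using play_ok[OF xal yal xy hyp] .
  then show ?thesis using st un by simp
qed

lemma ins_card:
  assumes hs: "set h \<subseteq> I" and nt: "\<not> terminal n h"
  shows "set (h @ [play W (insertion_strategy n h)]) \<subseteq> I \<and>
         card (rk h) < card (rk (h @ [play W (insertion_strategy n h)]))"
proof -
  obtain x y where st: "insertion_strategy n h = (x,y)" by fastforce
  have S: "unranked n h x y" "play W (x,y) \<in> I" using ins_step[OF hs nt] st by simp_all
  define v where "v = play W (x,y)"
  have fI: "finite I" using Isub finite_alts finite_subset by blast
  have vn: "v \<notin> rk h" using S(1) unfolding unranked_def play_def v_def by auto
  have s1: "set (h @ [v]) \<subseteq> I" using hs S(2) v_def by simp
  have sub1: "rk h \<subseteq> rk (h @ [v])" unfolding rk_def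
  proof
    fix p assume "p \<in> (set h)\<^sup>+"
    then show "p \<in> (set (h @ [v]))\<^sup>+" by (rule trancl_mono) auto
  qed
  have vin: "v \<in> rk (h @ [v])" unfolding rk_def by (rule r_into_trancl') simp
  have fin: "finite (rk (h @ [v]))" using rk_sub[OF s1] fI finite_subset by blast
  have "rk h \<subset> rk (h @ [v])" using sub1 vin vn by blast
  then have "card (rk h) < card (rk (h @ [v]))" using fin psubset_card_mono by blast
  then show ?thesis using s1 st v_def by simp
qed

lemma ins_outcome: "outcome n (insertion_strategy n) W = I"
proof -
  let ?t = "insertion_strategy n"
  have fI: "finite I" using Isub finite_alts finite_subset by blast
  have inv: "set (hist n ?t W k) \<subseteq> I \<and> (terminal n (hist n ?t W k) \<or> k \<le> card (rk (hist n ?t W k)))" for k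
  proof (induction k)
    case 0 then show ?case by simp
  next
    case (Suc k)
    show ?case
    proof (cases "terminal n (hist n ?t W k)")
      case True then show ?thesis using Suc by simp
    next
      case False
      have hs: "set (hist n ?t W k) \<subseteq> I" using Suc by blast
      have kc: "k \<le> card (rk (hist n ?t W k))" using Suc False by blast
      have e: "hist n ?t W (Suc k) = hist n ?t W k @ [play W (?t (hist n ?t W k))]" using False by simp
      show ?thesis unfolding e using ins_card[OF hs False] kc by linarith
    qed
  qed
  have ex: "\<exists>k. terminal n (hist n ?t W k)"
  proof (rule ccontr)
    assume nt: "\<not> ?thesis"
    let ?k = "Suc (card I)"
    have i: "set (hist n ?t W ?k) \<subseteq> I" "?k \<le> card (rk (hist n ?t W ?k))" using inv[of ?k] nt by blast+
    have "card (rk (hist n ?t W ?k)) \<le> card I"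
      using card_mono[OF fI rk_sub[OF i(1)]] .
    then show False using i(2) by simp
  qed
  have sub: "set (hist n ?t W k) \<subseteq> I" for k using inv[of k] by blast
  show ?thesis by (rule outcome_I[OF ex sub])
qed

end

theorem proposition3:
  assumes "is_strategy n \<sigma>"
    and "amendment_strategy n \<sigma>"
  shows "outcome_equiv n \<sigma> (insertion_strategy n)"
  unfolding outcome_equiv_def
proof (intro allI impI)
  fix W assume tour: "tournament n W"
  have "alts n \<subseteq> alts n" by simp
  then obtain I where I: "sto (alts n) I" "condA W (alts n) I" "condB W (alts n) I"
    using exists_I[OF tour finite_alts] by blast
  show "outcome n \<sigma> W = outcome n (insertion_strategy n) W"
    using sigma_outcome[OF tour I assms(2)] ins_outcome[OF tour I] by simp
qed

end
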